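(* Let $v>0$, $d>0$ and $s\ge\frac d2$. Let $M=\lfloor 2s/d\rfloor+1$. For $i\in\{1,\dots,M\}$, lane $i$ is the horizontal line $y=s-(i-1)d$, and the robots of lane $i$ are at time $0$ at the positions $(s+kd,\ s-(i-1)d)$, $k\in\mathbb{Z}_{\ge0}$, all moving with constant velocity $(-v,0)$; a robot reaches the target when its distance to the origin is at most $s$. For $j\in\{1,\dots,M\}$ let $d_j=s-\sqrt{s^2-(s-(j-1)d)^2}$, and let $$J=\begin{cases}\lfloor s/d\rfloor+1,&\text{if } |s-\lfloor s/d\rfloor d|\le|s-\lceil s/d\rceil d|,\\ \lceil s/d\rceil+1,&\text{otherwise.}\end{cases}$$ Then $d_J=\min_{1\le j\le M}d_j$, so the first robot to reach the target is the one starting at $(s,s-(J-1)d)$, and, measuring time from this first arrival, for every $T>0$ the throughput is $$f_p(T)=\frac1T\sum_{i=1}^{M}N_i(T)-\frac1T,\qquad N_i(T)=\begin{cases}\left\lfloor\frac{vT-d_i+d_J}{d}+1\right\rfloor,& T\ge\frac{d_i-d_J}{v},\\ 0,&\text{otherwise,}\end{cases}$$ and $\displaystyle\lim_{T\to\infty}f_p(T)=\left\lfloor\frac{2s}{d}+1\right\rfloor\frac vd$.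
   Context: Throughput at time $T>0$ after the first robot reaches the target: $f(T)=\frac{N(T)-1}{T}$, where $N(T)$ is the number of robots that reached the target (closed disc of radius $s$ centred at the origin) by time $T$, time $0$ being the arrival of the first robot. $N_i(T)$ is the number of robots of lane $i$ that have arrived by time $T$. This is the "parallel lanes" strategy. *)

theory Defs
  imports "HOL-Analysis.Analysis"
begin

text \<open>Absolute time t starts at 0 (initial configuration).\<close>

definition num_lanes :: "real \<Rightarrow> real \<Rightarrow> nat" where
  "num_lanes d s = nat \<lfloor>2 * s / d\<rfloor> + 1"

definition robot_pos :: "real \<Rightarrow> real \<Rightarrow> real \<Rightarrow> nat \<Rightarrow> nat \<Rightarrow> real \<Rightarrow> real \<times> real" where
  "robot_pos v d s i k t = (s + real k * d - v * t, s - (real i - 1) * d)"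

definition arrival :: "real \<Rightarrow> real \<Rightarrow> real \<Rightarrow> nat \<Rightarrow> nat \<Rightarrow> real" where
  "arrival v d s i k = Inf {t. 0 \<le> t \<and> robot_pos v d s i k t \<in> cball 0 s}"

definition first_arrival :: "real \<Rightarrow> real \<Rightarrow> real \<Rightarrow> real" where
  "first_arrival v d s = Inf {arrival v d s i k | i k. i \<in> {1..num_lanes d s}}"

definition lane_count :: "real \<Rightarrow> real \<Rightarrow> real \<Rightarrow> nat \<Rightarrow> real \<Rightarrow> nat" where
  "lane_count v d s i T = card {k. arrival v d s i k \<le> first_arrival v d s + T}"

definition total_count :: "real \<Rightarrow> real \<Rightarrow> real \<Rightarrow> real \<Rightarrow> nat" where
  "total_count v d s T =
     card {(i, k). i \<in> {1..num_lanes d s} \<and> arrival v d s i k \<le> first_arrival v d s + T}"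

definition throughput :: "real \<Rightarrow> real \<Rightarrow> real \<Rightarrow> real \<Rightarrow> real" where
  "throughput v d s T = (real (total_count v d s T) - 1) / T"

definition dlane :: "real \<Rightarrow> real \<Rightarrow> nat \<Rightarrow> real" where
  "dlane d s j = s - sqrt (s\<^sup>2 - (s - (real j - 1) * d)\<^sup>2)"

definition Jlane :: "real \<Rightarrow> real \<Rightarrow> nat" where
  "Jlane d s = (if \<bar>s - real_of_int \<lfloor>s / d\<rfloor> * d\<bar> \<le> \<bar>s - real_of_int \<lceil>s / d\<rceil> * d\<bar>
                then nat \<lfloor>s / d\<rfloor> + 1 else nat \<lceil>s / d\<rceil> + 1)"

end

theory Submission
  imports Defs "HOL-Real_Asymp.Real_Asymp"
begin

lemma y_bounds:
  assumes "d > 0" "s \<ge> d/2" "i \<in> {1..num_lanes d s}"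
  shows "\<bar>s - (real i - 1) * d\<bar> \<le> s"
proof -
  have i1: "real i \<ge> 1" using assms(3) by auto
  have "real i \<le> real (nat \<lfloor>2 * s / d\<rfloor>) + 1" using assms(3) by (auto simp: num_lanes_def)
  moreover have "real (nat \<lfloor>2 * s / d\<rfloor>) = \<lfloor>2 * s / d\<rfloor>"
    using assms by (simp add: divide_nonneg_pos)
  moreover have "real_of_int \<lfloor>2 * s / d\<rfloor> \<le> 2 * s / d" by simp
  ultimately have "real i - 1 \<le> 2 * s / d" by linarith
  hence "(real i - 1) * d \<le> 2 * s" using assms(1) by (simp add: pos_le_divide_eq)
  moreover have "(real i - 1) * d \<ge> 0" using i1 assms(1) by simp
  ultimately show ?thesis using assms by (simp add: abs_le_iff)
qed

lemma w_facts:
  assumes "\<bar>y\<bar> \<le> s"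
  shows "sqrt (s\<^sup>2 - y\<^sup>2) \<ge> 0" "sqrt (s\<^sup>2 - y\<^sup>2) \<le> s" "(sqrt (s\<^sup>2 - y\<^sup>2))\<^sup>2 = s\<^sup>2 - y\<^sup>2"
proof -
  have s0: "s \<ge> 0" using assms by linarith
  have "\<bar>y\<bar> \<le> \<bar>s\<bar>" using assms s0 by simp
  hence h: "y\<^sup>2 \<le> s\<^sup>2" by (metis abs_le_square_iff)
  thus "(sqrt (s\<^sup>2 - y\<^sup>2))\<^sup>2 = s\<^sup>2 - y\<^sup>2" by simp
  show "sqrt (s\<^sup>2 - y\<^sup>2) \<ge> 0" using h by simp
  have "sqrt (s\<^sup>2 - y\<^sup>2) \<le> sqrt (s\<^sup>2)" by (simp only: real_sqrt_le_iff) simp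
  thus "sqrt (s\<^sup>2 - y\<^sup>2) \<le> s" using s0 by simp
qed

lemma dlane_bounds:
  assumes "d > 0" "s \<ge> d/2" "i \<in> {1..num_lanes d s}"
  shows "0 \<le> dlane d s i" "dlane d s i \<le> s"
  using w_facts[OF y_bounds[OF assms]] by (auto simp: dlane_def)

lemma arrival_eq:
  assumes "v > 0" "d > 0" "s \<ge> d/2" "i \<in> {1..num_lanes d s}"
  shows "arrival v d s i k = (real k * d + dlane d s i) / v"
proof -
  define y where "y = s - (real i - 1) * d"
  define w where "w = sqrt (s\<^sup>2 - y\<^sup>2)"
  have yb: "\<bar>y\<bar> \<le> s" using y_bounds[OF assms(2-4)] y_def by simp
  have s0: "s \<ge> 0" using yb by linarith
  note wf = w_facts[OF yb, folded w_def]
  have dl: "dlane d s i = s - w" by (simp add: dlane_def w_def y_def)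
  have mem: "robot_pos v d s i k t \<in> cball 0 s \<longleftrightarrow> \<bar>s + real k * d - v * t\<bar> \<le> w" for t
  proof -
    have "robot_pos v d s i k t \<in> cball 0 s \<longleftrightarrow> (s + real k * d - v * t)\<^sup>2 + y\<^sup>2 \<le> s\<^sup>2"
      by (simp add: robot_pos_def norm_Pair y_def real_sqrt_le_iff' s0)
    also have "\<dots> \<longleftrightarrow> (s + real k * d - v * t)\<^sup>2 \<le> w\<^sup>2" using wf by linarith
    also have "\<dots> \<longleftrightarrow> \<bar>s + real k * d - v * t\<bar> \<le> w" by (rule power2_le_iff_abs_le[OF wf(1)])
    finally show ?thesis .
  qed
  define a where "a = (real k * d + dlane d s i) / v"
  have va: "v * a = real k * d + s - w" using assms(1) by (simp add: a_def dl)
  have a0: "a \<ge> 0" using assms wf by (simp add: a_def dl)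
  have "robot_pos v d s i k a \<in> cball 0 s" unfolding mem using va wf by simp
  hence "a \<in> {t. 0 \<le> t \<and> robot_pos v d s i k t \<in> cball 0 s}"
    using a0 by simp
  moreover have "a \<le> t" if "t \<in> {t. 0 \<le> t \<and> robot_pos v d s i k t \<in> cball 0 s}" for t
  proof -
    have "robot_pos v d s i k t \<in> cball 0 s" using that by blast
    hence "s + real k * d - v * t \<le> w" unfolding mem by linarith
    hence "v * a \<le> v * t" using va by linarith
    thus ?thesis using assms(1) by simp
  qed
  ultimately show ?thesis unfolding arrival_def a_def[symmetric] by (rule cInf_eq_minimum)
qed

lemma J_range:
  assumes "d > 0" "s \<ge> d/2"
  shows "Jlane d s \<in> {1..num_lanes d s}"
proof -
  define x where "x = s / d"
  have x: "x \<ge> 1/2" using assms by (simp add: x_def field_simps)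
  have 2: "2 * s / d = 2 * x" by (simp add: x_def)
  have "\<lfloor>x\<rfloor> \<le> \<lfloor>2*x\<rfloor>" using x by (intro floor_mono) linarith
  then have f1: "\<lfloor>x\<rfloor> \<le> \<lfloor>2*x\<rfloor>" .
  have f2: "\<lceil>x\<rceil> \<le> \<lfloor>2*x\<rfloor>"
  proof -
    have a: "of_int \<lceil>x\<rceil> < x + 1" by linarith
    have b: "\<lceil>x\<rceil> \<ge> 1" using x by linarith
    have "real_of_int \<lceil>x\<rceil> \<le> 2 * x"
    proof (cases "\<lceil>x\<rceil> \<ge> 2")
      case True thus ?thesis using a by linarith
    next
      case False hence "\<lceil>x\<rceil> = 1" using b by linarith
      thus ?thesis using x by simp
    qed
    thus ?thesis by (simp add: le_floor_iff)
  qed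
  have h: "nat \<lfloor>x\<rfloor> + 1 \<le> nat \<lfloor>2*x\<rfloor> + 1" "nat \<lceil>x\<rceil> + 1 \<le> nat \<lfloor>2*x\<rfloor> + 1"
    by (rule add_right_mono[OF nat_mono[OF f1]], rule add_right_mono[OF nat_mono[OF f2]])
  have "Jlane d s = nat \<lfloor>x\<rfloor> + 1 \<or> Jlane d s = nat \<lceil>x\<rceil> + 1"
    unfolding Jlane_def x_def by simp
  moreover have "num_lanes d s = nat \<lfloor>2*x\<rfloor> + 1" unfolding num_lanes_def 2 ..
  ultimately show ?thesis using h by auto
qed

lemma J_min:
  assumes "d > 0" "s \<ge> d/2" "i \<in> {1..num_lanes d s}"
  shows "dlane d s (Jlane d s) \<le> dlane d s i"
proof -
  define fl where "fl = \<lfloor>s/d\<rfloor>"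
  define ce where "ce = \<lceil>s/d\<rceil>"
  have s0: "s \<ge> 0" using assms by linarith
  have sd0: "s / d \<ge> 0" using assms s0 by (simp add: divide_nonneg_pos)
  have fl0: "fl \<ge> 0" using sd0 by (simp add: fl_def)
  have ce0: "ce \<ge> 0" using sd0 unfolding ce_def by linarith
  have fls: "of_int fl * d \<le> s" using assms(1) by (simp add: fl_def pos_le_divide_eq[symmetric])
  have ces: "of_int ce * d \<ge> s" using assms(1) by (simp add: ce_def pos_divide_le_eq[symmetric])
  have cefl: "ce \<le> fl + 1" unfolding ce_def fl_def by linarith
  define m where "m = int i - 1"
  have mi: "real i - 1 = of_int m" by (simp add: m_def)
  have yJ: "\<bar>s - (real (Jlane d s) - 1) * d\<bar> = min \<bar>s - of_int fl * d\<bar> \<bar>s - of_int ce * d\<bar>"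
    using fl0 ce0 sd0 unfolding Jlane_def fl_def[symmetric] ce_def[symmetric] by auto
  have "\<bar>s - (real (Jlane d s) - 1) * d\<bar> \<le> \<bar>s - (real i - 1) * d\<bar>"
  proof (cases "m \<le> fl")
    case True
    hence "of_int m * d \<le> of_int fl * d" using assms(1) by (simp add: mult_right_mono)
    thus ?thesis unfolding yJ mi using fls by linarith
  next
    case False
    hence "ce \<le> m" using cefl by linarith
    hence "of_int ce * d \<le> of_int m * d" using assms(1) by (simp add: mult_right_mono)
    thus ?thesis unfolding yJ mi using ces by linarith
  qed
  hence "(s - (real (Jlane d s) - 1) * d)\<^sup>2 \<le> (s - (real i - 1) * d)\<^sup>2"
    by (simp add: abs_le_square_iff)
  thus ?thesis unfolding dlane_def by (simp add: real_sqrt_le_iff)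
qed

lemma first_arr:
  assumes "v > 0" "d > 0" "s \<ge> d/2"
  shows "first_arrival v d s = dlane d s (Jlane d s) / v"
proof -
  have Jr: "Jlane d s \<in> {1..num_lanes d s}" by (rule J_range[OF assms(2,3)])
  have "arrival v d s (Jlane d s) 0 \<in> {arrival v d s i k | i k. i \<in> {1..num_lanes d s}}"
    using Jr by blast
  moreover have "arrival v d s (Jlane d s) 0 \<le> x"
    if xin: "x \<in> {arrival v d s i k | i k. i \<in> {1..num_lanes d s}}" for x
  proof -
    obtain i k where x: "x = arrival v d s i k" and i: "i \<in> {1..num_lanes d s}" using xin by blast
    have "dlane d s (Jlane d s) \<le> real k * d + dlane d s i"
    proof -
      have "real k * d \<ge> 0" using assms(2) by simp
      thus ?thesis using J_min[OF assms(2,3) i] by linarith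
    qed
    hence "dlane d s (Jlane d s) / v \<le> (real k * d + dlane d s i) / v"
      using assms(1) by (simp add: divide_right_mono)
    thus ?thesis using x arrival_eq[OF assms i] arrival_eq[OF assms Jr] by simp
  qed
  ultimately have "first_arrival v d s = arrival v d s (Jlane d s) 0"
    unfolding first_arrival_def by (rule cInf_eq_minimum)
  thus ?thesis using arrival_eq[OF assms Jr] by simp
qed

lemma count_le:
  fixes q :: real
  shows "finite {k::nat. real k \<le> q}"
    and "real (card {k::nat. real k \<le> q}) = (if q \<ge> 0 then real_of_int \<lfloor>q + 1\<rfloor> else 0)"
proof -
  show "finite {k::nat. real k \<le> q}"
  proof (rule finite_subset[of _ "{..nat \<lceil>q\<rceil>}"])
    show "{k::nat. real k \<le> q} \<subseteq> {..nat \<lceil>q\<rceil>}"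
    proof
      fix k assume "k \<in> {k::nat. real k \<le> q}"
      hence "real k \<le> q" by simp
      moreover have "real_of_int (int k) = real k" by simp
      ultimately have "real_of_int (int k) \<le> of_int \<lceil>q\<rceil>" using le_of_int_ceiling[of q] by linarith
      hence "int k \<le> \<lceil>q\<rceil>" by (simp only: of_int_le_iff)
      thus "k \<in> {..nat \<lceil>q\<rceil>}" by simp
    qed
  qed simp
  show "real (card {k::nat. real k \<le> q}) = (if q \<ge> 0 then real_of_int \<lfloor>q + 1\<rfloor> else 0)"
  proof (cases "q \<ge> 0")
    case True
    have "{k::nat. real k \<le> q} = {..nat \<lfloor>q\<rfloor>}"
    proof (intro set_eqI iffI)
      fix k assume "k \<in> {k::nat. real k \<le> q}"
      hence "real_of_int (int k) \<le> q" by simp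
      hence "int k \<le> \<lfloor>q\<rfloor>" by (simp only: le_floor_iff)
      thus "k \<in> {..nat \<lfloor>q\<rfloor>}" by simp
    next
      fix k assume "k \<in> {..nat \<lfloor>q\<rfloor>}"
      hence "k \<le> nat \<lfloor>q\<rfloor>" by simp
      hence "int k \<le> \<lfloor>q\<rfloor>" using True by linarith
      hence "real_of_int (int k) \<le> q" by (simp only: le_floor_iff)
      thus "k \<in> {k::nat. real k \<le> q}" by simp
    qed
    moreover have "\<lfloor>q\<rfloor> \<ge> 0" using True by simp
    ultimately show ?thesis using True by simp
  next
    case False
    hence "{k::nat. real k \<le> q} = {}" by auto
    thus ?thesis using False by simp
  qed
qed

lemma lane_set:
  assumes "v > 0" "d > 0" "s \<ge> d/2" "i \<in> {1..num_lanes d s}"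
  shows "{k. arrival v d s i k \<le> first_arrival v d s + T}
       = {k::nat. real k \<le> (v * T - dlane d s i + dlane d s (Jlane d s)) / d}"
proof -
  have "arrival v d s i k \<le> first_arrival v d s + T \<longleftrightarrow>
        real k \<le> (v * T - dlane d s i + dlane d s (Jlane d s)) / d" for k
  proof -
    have "arrival v d s i k \<le> first_arrival v d s + T \<longleftrightarrow>
      (real k * d + dlane d s i) / v \<le> dlane d s (Jlane d s) / v + T"
      using arrival_eq[OF assms] first_arr[OF assms(1-3)] by simp
    also have "\<dots> \<longleftrightarrow> (real k * d + dlane d s i) / v \<le> (dlane d s (Jlane d s) + v * T) / v"
      using assms(1) by (simp add: add_divide_distrib)
    also have "\<dots> \<longleftrightarrow> real k * d + dlane d s i \<le> dlane d s (Jlane d s) + v * T"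
      using assms(1) by (simp add: divide_le_cancel)
    also have "\<dots> \<longleftrightarrow> real k * d \<le> v * T - dlane d s i + dlane d s (Jlane d s)" by linarith
    also have "\<dots> \<longleftrightarrow> real k \<le> (v * T - dlane d s i + dlane d s (Jlane d s)) / d"
      using assms(2) by (simp add: pos_le_divide_eq)
    finally show ?thesis .
  qed
  thus ?thesis by blast
qed

lemma lane_count_eq:
  assumes "v > 0" "d > 0" "s \<ge> d/2" "i \<in> {1..num_lanes d s}"
  shows "real (lane_count v d s i T) =
          (if T \<ge> (dlane d s i - dlane d s (Jlane d s)) / v
           then real_of_int \<lfloor>(v * T - dlane d s i + dlane d s (Jlane d s)) / d + 1\<rfloor> else 0)"
proof -
  have "T \<ge> (dlane d s i - dlane d s (Jlane d s)) / v \<longleftrightarrow>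
        (v * T - dlane d s i + dlane d s (Jlane d s)) / d \<ge> 0"
  proof -
    have "T \<ge> (dlane d s i - dlane d s (Jlane d s)) / v \<longleftrightarrow> dlane d s i - dlane d s (Jlane d s) \<le> T * v"
      using assms(1) by (simp add: pos_divide_le_eq)
    also have "\<dots> \<longleftrightarrow> 0 \<le> v * T - dlane d s i + dlane d s (Jlane d s)" by (auto simp: mult.commute)
    also have "\<dots> \<longleftrightarrow> (v * T - dlane d s i + dlane d s (Jlane d s)) / d \<ge> 0"
      using assms(2) by (simp add: zero_le_divide_iff)
    finally show ?thesis .
  qed
  thus ?thesis unfolding lane_count_def lane_set[OF assms] count_le(2) by simp
qed

lemma total_eq:
  assumes "v > 0" "d > 0" "s \<ge> d/2"
  shows "total_count v d s T = (\<Sum>i=1..num_lanes d s. lane_count v d s i T)"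
proof -
  have "{(i, k). i \<in> {1..num_lanes d s} \<and> arrival v d s i k \<le> first_arrival v d s + T}
     = Sigma {1..num_lanes d s} (\<lambda>i. {k. arrival v d s i k \<le> first_arrival v d s + T})" by auto
  moreover have "\<forall>i\<in>{1..num_lanes d s}. finite {k. arrival v d s i k \<le> first_arrival v d s + T}"
    using lane_set[OF assms] count_le(1) by simp
  ultimately show ?thesis unfolding total_count_def lane_count_def
    by (simp add: card_SigmaI)
qed

lemma limit_part:
  assumes v: "v > 0" and d: "d > 0" and s: "s \<ge> d/2"
  shows "(throughput v d s \<longlongrightarrow> real (num_lanes d s) * v / d) at_top"
proof -
  define M where "M = num_lanes d s"
  define dJ where "dJ = dlane d s (Jlane d s)"
  define c where "c i = (dJ - dlane d s i) / d" for i
  define C where "C = (\<Sum>i=1..M. c i)"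
  define L where "L T = real M * v / d + (C - 1) / T" for T
  define U where "U T = real M * v / d + (C + real M - 1) / T" for T
  have JR: "Jlane d s \<in> {1..M}" using J_range[OF d s] M_def by simp
  have dJ0: "dJ \<ge> 0" using dlane_bounds[OF d s JR[unfolded M_def]] dJ_def by simp
  have ev: "eventually (\<lambda>T. T \<ge> s / v + 1) at_top" by (rule eventually_ge_at_top)
  have key: "L T \<le> throughput v d s T \<and> throughput v d s T \<le> U T" if T: "T \<ge> s / v + 1" for T
  proof -
    have s0: "s / v \<ge> 0" using s d v by (simp add: divide_nonneg_pos)
    have Tp: "T > 0" using T s0 by linarith
    define q where "q i = v * T / d + c i" for i
    have lc: "real (lane_count v d s i T) = real_of_int \<lfloor>q i + 1\<rfloor>" if i: "i \<in> {1..M}" for i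
    proof -
      have "dlane d s i \<le> s" using dlane_bounds[OF d s i[unfolded M_def]] by simp
      hence "dlane d s i - dJ \<le> s" using dJ0 by linarith
      hence "(dlane d s i - dJ) / v \<le> s / v" using v by (simp add: divide_right_mono)
      hence "T \<ge> (dlane d s i - dJ) / v" using T by linarith
      moreover have "(v * T - dlane d s i + dJ) / d = q i"
        by (simp add: q_def c_def diff_divide_distrib add_divide_distrib)
      ultimately show ?thesis using lane_count_eq[OF v d s i[unfolded M_def]] dJ_def by simp
    qed
    have S: "(\<Sum>i=1..M. real (lane_count v d s i T)) = (\<Sum>i=1..M. real_of_int \<lfloor>q i + 1\<rfloor>)"
      using lc by (rule sum.cong[OF refl])
    have sq: "(\<Sum>i=1..M. q i) = real M * (v * T / d) + C"
      by (simp add: q_def sum.distrib C_def)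
    have lo: "(\<Sum>i=1..M. q i) \<le> (\<Sum>i=1..M. real_of_int \<lfloor>q i + 1\<rfloor>)"
      by (rule sum_mono) linarith
    have hi: "(\<Sum>i=1..M. real_of_int \<lfloor>q i + 1\<rfloor>) \<le> (\<Sum>i=1..M. q i + 1)"
      by (rule sum_mono) linarith
    have hi': "(\<Sum>i=1..M. q i + 1) = real M * (v * T / d) + C + real M"
      using sq by (simp add: sum.distrib)
    have thr: "throughput v d s T = ((\<Sum>i=1..M. real_of_int \<lfloor>q i + 1\<rfloor>) - 1) / T"
      unfolding throughput_def total_eq[OF v d s] M_def[symmetric] S[symmetric] by simp
    have Le: "L T = (real M * (v * T / d) + C - 1) / T" using Tp by (simp add: L_def field_simps)
    have Ue: "U T = (real M * (v * T / d) + C + real M - 1) / T" using Tp by (simp add: U_def field_simps)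
    show ?thesis unfolding thr Le Ue using lo hi hi' sq Tp
      by (auto intro!: divide_right_mono)
  qed
  have "(L \<longlongrightarrow> real M * v / d) at_top" unfolding L_def by real_asymp
  moreover have "(U \<longlongrightarrow> real M * v / d) at_top" unfolding U_def by real_asymp
  moreover have "eventually (\<lambda>T. L T \<le> throughput v d s T) at_top"
    using ev by eventually_elim (use key in blast)
  moreover have "eventually (\<lambda>T. throughput v d s T \<le> U T) at_top"
    using ev by eventually_elim (use key in blast)
  ultimately show ?thesis unfolding M_def[symmetric] by (rule tendsto_sandwich[rotated 2])
qed

theorem proposition4:
  fixes v d s :: real
  assumes "v > 0" and "d > 0" and "s \<ge> d / 2"
  defines "M \<equiv> num_lanes d s" and "J \<equiv> Jlane d s"
  shows "J \<in> {1..M}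
    \<and> dlane d s J = Min (dlane d s ` {1..M})
    \<and> arrival v d s J 0 = first_arrival v d s
    \<and> (\<forall>i\<in>{1..M}. \<forall>T>0. real (lane_count v d s i T) =
          (if T \<ge> (dlane d s i - dlane d s J) / v
           then real_of_int \<lfloor>(v * T - dlane d s i + dlane d s J) / d + 1\<rfloor> else 0))
    \<and> (\<forall>T>0. throughput v d s T =
          (1 / T) * (\<Sum>i=1..M. real (lane_count v d s i T)) - 1 / T)
    \<and> (throughput v d s \<longlongrightarrow> real_of_int \<lfloor>2 * s / d + 1\<rfloor> * v / d) at_top"
proof (intro conjI)
  note a = assms(1-3)
  show JR: "J \<in> {1..M}" using J_range[OF assms(2,3)] unfolding M_def J_def .
  show "dlane d s J = Min (dlane d s ` {1..M})"
    using JR J_min[OF assms(2,3)] unfolding M_def J_def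
    by (intro Min_eqI[symmetric]) auto
  show "arrival v d s J 0 = first_arrival v d s"
    using arrival_eq[OF a JR[unfolded M_def]] first_arr[OF a] unfolding J_def by simp
  show "\<forall>i\<in>{1..M}. \<forall>T>0. real (lane_count v d s i T) =
          (if T \<ge> (dlane d s i - dlane d s J) / v
           then real_of_int \<lfloor>(v * T - dlane d s i + dlane d s J) / d + 1\<rfloor> else 0)"
    using lane_count_eq[OF a] unfolding M_def J_def by blast
  show "\<forall>T>0. throughput v d s T =
          (1 / T) * (\<Sum>i=1..M. real (lane_count v d s i T)) - 1 / T"
    unfolding throughput_def total_eq[OF a] M_def by (simp add: diff_divide_distrib)
  have f0: "\<lfloor>2 * s / d\<rfloor> \<ge> 0" using assms(2,3) by (simp add: divide_nonneg_pos)
  have "real_of_int \<lfloor>2 * s / d + 1\<rfloor> = real M"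
    using f0 unfolding M_def num_lanes_def by simp
  thus "(throughput v d s \<longlongrightarrow> real_of_int \<lfloor>2 * s / d + 1\<rfloor> * v / d) at_top"
    using limit_part[OF a] unfolding M_def by simp
qed

end
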